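(* Let $R$ be a commutative ring and $S$ a multiplicative subset of $R$. Then $R$ has $u$-$S$-Noetherian spectrum if and only if the polynomial ring $R[X]$ has $u$-$S$-Noetherian spectrum (where $S$ is regarded as a multiplicative subset of $R[X]$ via $R\subseteq R[X]$).
   Context: A ring $A$ with multiplicative subset $S$ has uniformly $S$-Noetherian ($u$-$S$-Noetherian) spectrum if there exists a single $s\in S$ such that for every ideal $I$ of $A$ there is a finitely generated ideal $J\subseteq I$ with $sI\subseteq\sqrt{J}$ (so $sI\subseteq\sqrt J\subseteq\sqrt I$). *)

theory Defs
  imports "HOL-Computational_Algebra.Polynomial"
begin

definition is_ideal :: "'a::comm_ring_1 set \<Rightarrow> bool" where
  "is_ideal I \<longleftrightarrow> 0 \<in> I \<and> (\<forall>x\<in>I. \<forall>y\<in>I. x + y \<in> I) \<and> (\<forall>r x. x \<in> I \<longrightarrow> r * x \<in> I)"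

definition ideal_gen :: "'a::comm_ring_1 set \<Rightarrow> 'a set" where
  "ideal_gen F = \<Inter>{I. is_ideal I \<and> F \<subseteq> I}"

definition fin_gen_ideal :: "'a::comm_ring_1 set \<Rightarrow> bool" where
  "fin_gen_ideal J \<longleftrightarrow> (\<exists>F. finite F \<and> J = ideal_gen F)"

definition radical :: "'a::comm_ring_1 set \<Rightarrow> 'a set" where
  "radical J = {x. \<exists>n::nat. x ^ n \<in> J}"

definition mult_subset :: "'a::comm_ring_1 set \<Rightarrow> bool" where
  "mult_subset S \<longleftrightarrow> 1 \<in> S \<and> (\<forall>s\<in>S. \<forall>t\<in>S. s * t \<in> S)"

definition u_S_noetherian_spectrum :: "'a::comm_ring_1 set \<Rightarrow> bool" where
  "u_S_noetherian_spectrum S \<longleftrightarrow>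
     (\<exists>s\<in>S. \<forall>I. is_ideal I \<longrightarrow>
        (\<exists>J. fin_gen_ideal J \<and> J \<subseteq> I \<and> (\<lambda>x. s * x) ` I \<subseteq> radical J))"

end

theory Submission
  imports Defs
begin

lemma ideal_gen_ideal: "is_ideal (ideal_gen F)"
  unfolding ideal_gen_def is_ideal_def by auto

lemma ideal_gen_sup: "F \<subseteq> ideal_gen F"
  unfolding ideal_gen_def by auto

lemma ideal_gen_least: "is_ideal I \<Longrightarrow> F \<subseteq> I \<Longrightarrow> ideal_gen F \<subseteq> I"
  unfolding ideal_gen_def by auto

lemma ideal_0: "is_ideal I \<Longrightarrow> 0 \<in> I"
  unfolding is_ideal_def by auto
lemma ideal_add: "is_ideal I \<Longrightarrow> x \<in> I \<Longrightarrow> y \<in> I \<Longrightarrow> x + y \<in> I"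
  unfolding is_ideal_def by auto
lemma ideal_multL: "is_ideal I \<Longrightarrow> x \<in> I \<Longrightarrow> r * x \<in> I"
  unfolding is_ideal_def by auto
lemma ideal_multR: "is_ideal I \<Longrightarrow> x \<in> I \<Longrightarrow> x * r \<in> I"
  unfolding is_ideal_def by (metis mult.commute)
lemma ideal_neg: "is_ideal I \<Longrightarrow> x \<in> I \<Longrightarrow> - x \<in> I"
  using ideal_multL[of I x "-1"] by simp
lemma ideal_diff: "is_ideal I \<Longrightarrow> x \<in> I \<Longrightarrow> y \<in> I \<Longrightarrow> x - y \<in> I"
  using ideal_add[of I x "-y"] ideal_neg[of I y] by simp

lemma ideal_sum: "is_ideal I \<Longrightarrow> (\<And>i. i \<in> A \<Longrightarrow> f i \<in> I) \<Longrightarrow> sum f A \<in> I"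
proof (induction A rule: infinite_finite_induct)
  case (infinite A) then show ?case by (simp add: ideal_0)
next
  case empty then show ?case by (simp add: ideal_0)
next
  case (insert x F) then show ?case by (simp add: ideal_add)
qed

lemma ideal_pow: "is_ideal I \<Longrightarrow> x ^ m \<in> I \<Longrightarrow> m \<le> k \<Longrightarrow> x ^ k \<in> I"
proof -
  assume "is_ideal I" "x ^ m \<in> I" "m \<le> k"
  then have "x ^ (k - m) * x ^ m \<in> I" by (simp add: ideal_multL)
  then show ?thesis using \<open>m \<le> k\<close> by (simp add: power_add[symmetric])
qed

lemma binom_in_ideal:
  fixes x y :: "'a::comm_ring_1"
  assumes I: "is_ideal I" and x: "x ^ m \<in> I" and y: "y ^ n \<in> I"
  shows "(x + y) ^ (m + n) \<in> I"
proof -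
  have "(x + y) ^ (m + n) = (\<Sum>k\<le>m+n. of_nat ((m+n) choose k) * x ^ k * y ^ (m + n - k))"
    by (rule binomial_ring)
  also have "\<dots> \<in> I"
  proof (rule ideal_sum[OF I])
    fix k assume "k \<in> {..m+n}"
    show "of_nat ((m+n) choose k) * x ^ k * y ^ (m + n - k) \<in> I"
    proof (cases "m \<le> k")
      case True
      then have "x ^ k \<in> I" using ideal_pow[OF I x] by simp
      then show ?thesis using I by (metis ideal_multL ideal_multR)
    next
      case False
      then have "y ^ (m + n - k) \<in> I" using ideal_pow[OF I y] by simp
      then show ?thesis using I by (metis ideal_multL)
    qed
  qed
  finally show ?thesis .
qed

lemma radical_ideal:
  fixes J :: "'a::comm_ring_1 set"
  assumes J: "is_ideal J" shows "is_ideal (radical J)"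
proof -
  have "(0::'a) ^ 1 \<in> J" using ideal_0[OF J] by simp
  then have a: "0 \<in> radical J" unfolding radical_def by blast
  have b: "x + y \<in> radical J" if "x \<in> radical J" "y \<in> radical J" for x y
    using that binom_in_ideal[OF J] unfolding radical_def by blast
  have c: "r * x \<in> radical J" if xr: "x \<in> radical J" for r x
  proof -
    obtain n where "x ^ n \<in> J" using xr unfolding radical_def by blast
    then have "r ^ n * x ^ n \<in> J" using J by (simp add: ideal_multL)
    then show ?thesis unfolding radical_def by (metis (mono_tags) mem_Collect_eq power_mult_distrib)
  qed
  show ?thesis unfolding is_ideal_def using a b c by blast
qed

lemma radical_sup: "J \<subseteq> radical J"
  unfolding radical_def by (auto intro: exI[of _ 1])

lemma radical_mono: "J \<subseteq> K \<Longrightarrow> radical J \<subseteq> radical K"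
  unfolding radical_def by auto


lemma back_dir:
  fixes S :: "'a::comm_ring_1 set"
  assumes H: "u_S_noetherian_spectrum ((\<lambda>s. [:s:]) ` S)"
  shows "u_S_noetherian_spectrum S"
proof -
  obtain s where sS: "s \<in> S" and Hs: "\<And>I. is_ideal I \<Longrightarrow>
        (\<exists>J. fin_gen_ideal J \<and> J \<subseteq> I \<and> (\<lambda>x. [:s:] * x) ` I \<subseteq> radical J)"
    using H unfolding u_S_noetherian_spectrum_def by blast
  have "\<exists>J. fin_gen_ideal J \<and> J \<subseteq> I \<and> (\<lambda>x. s * x) ` I \<subseteq> radical J" if I: "is_ideal I" for I
  proof -
    define I' where "I' = {p. \<forall>i. coeff p i \<in> I}"
    have I'i: "is_ideal I'"
    proof -
      have "0 \<in> I'" using ideal_0[OF I] unfolding I'_def by simp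
      moreover have "x + y \<in> I'" if "x \<in> I'" "y \<in> I'" for x y
        using that ideal_add[OF I] unfolding I'_def by simp
      moreover have "r * x \<in> I'" if "x \<in> I'" for r x
      proof -
        have "coeff (r * x) i \<in> I" for i
          unfolding coeff_mult using that unfolding I'_def
          by (intro ideal_sum[OF I] ideal_multL[OF I]) simp
        then show ?thesis unfolding I'_def by simp
      qed
      ultimately show ?thesis unfolding is_ideal_def by blast
    qed
    obtain J where J: "fin_gen_ideal J" "J \<subseteq> I'" "(\<lambda>x. [:s:] * x) ` I' \<subseteq> radical J"
      using Hs[OF I'i] by blast
    obtain F where F: "finite F" "J = ideal_gen F" using J(1) unfolding fin_gen_ideal_def by blast
    define J0 where "J0 = ideal_gen ((\<lambda>p. coeff p 0) ` F)"
    have fg: "fin_gen_ideal J0" unfolding fin_gen_ideal_def J0_def using F(1) by blast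
    have sub: "J0 \<subseteq> I" unfolding J0_def
    proof (rule ideal_gen_least[OF I])
      show "(\<lambda>p. coeff p 0) ` F \<subseteq> I"
      proof
        fix c assume "c \<in> (\<lambda>p. coeff p 0) ` F"
        then obtain p where "p \<in> F" "c = coeff p 0" by blast
        then have "p \<in> I'" using ideal_gen_sup[of F] F(2) J(2) by blast
        then show "c \<in> I" unfolding I'_def using \<open>c = coeff p 0\<close> by blast
      qed
    qed
    have key: "ideal_gen F \<subseteq> {p. coeff p 0 \<in> J0}"
    proof (rule ideal_gen_least)
      show "is_ideal {p. coeff p 0 \<in> J0}"
      proof -
        have J0i: "is_ideal J0" unfolding J0_def by (rule ideal_gen_ideal)
        have "coeff 0 0 \<in> J0" using ideal_0[OF J0i] by simp
        moreover have "coeff (x + y) 0 \<in> J0" if "coeff x 0 \<in> J0" "coeff y 0 \<in> J0" for x y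
          using that ideal_add[OF J0i] by simp
        moreover have "coeff (r * x) 0 \<in> J0" if "coeff x 0 \<in> J0" for r x
          using that ideal_multL[OF J0i] by (simp add: coeff_mult_0)
        ultimately show ?thesis unfolding is_ideal_def by blast
      qed
      show "F \<subseteq> {p. coeff p 0 \<in> J0}"
      proof
        fix p assume "p \<in> F"
        then have "coeff p 0 \<in> (\<lambda>p. coeff p 0) ` F" by blast
        then show "p \<in> {p. coeff p 0 \<in> J0}" unfolding J0_def mem_Collect_eq by (rule subsetD[OF ideal_gen_sup])
      qed
    qed
    have "s * x \<in> radical J0" if x: "x \<in> I" for x
    proof -
      have "coeff [:x:] i \<in> I" for i using x ideal_0[OF I] by (cases i) simp_all
      then have "[:x:] \<in> I'" unfolding I'_def by simp
      then have "[:s:] * [:x:] \<in> (\<lambda>x. [:s:] * x) ` I'" by (rule imageI)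
      then have "[:s:] * [:x:] \<in> radical J" using J(3) by (rule subsetD[rotated])
      then obtain n where "([:s:] * [:x:]) ^ n \<in> ideal_gen F" using F(2) unfolding radical_def by blast
      then have "coeff (([:s:] * [:x:]) ^ n) 0 \<in> J0" using key by blast
      then have "(s * x) ^ n \<in> J0" by (simp add: poly_const_pow mult_ac)
      then show ?thesis unfolding radical_def by blast
    qed
    then have "(\<lambda>x. s * x) ` I \<subseteq> radical J0" by blast
    then show ?thesis using fg sub by blast
  qed
  then show ?thesis unfolding u_S_noetherian_spectrum_def using sS by (intro bexI[of _ s]) auto
qed


lemma P_ideal:
  fixes Q :: "'a::comm_ring_1 poly set"
  assumes Q: "is_ideal Q"
  shows "is_ideal {c. [:c:] \<in> Q}"
proof -
  have "[:0:] \<in> Q" using ideal_0[OF Q] by simp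
  moreover have "[:x + y:] \<in> Q" if "[:x:] \<in> Q" "[:y:] \<in> Q" for x y
    using ideal_add[OF Q that] by simp
  moreover have "[:r * x:] \<in> Q" if "[:x:] \<in> Q" for r x
    using ideal_multL[OF Q that, of "[:r:]"] by (simp add: mult.commute)
  ultimately show ?thesis unfolding is_ideal_def by blast
qed

lemma monom_in_Q:
  fixes Q :: "'a::comm_ring_1 poly set"
  assumes Q: "is_ideal Q" and b: "[:b:] \<in> Q"
  shows "monom b e \<in> Q"
proof -
  have "monom 1 e * [:b:] \<in> Q" using ideal_multL[OF Q b] .
  moreover have "monom 1 e * [:b:] = monom b e"
    by (metis monom_0 mult_monom mult_1 add_0_right)
  ultimately show ?thesis by simp
qed

lemma small_poly:
  fixes h :: "'a::comm_ring_1 poly"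
  assumes "\<forall>i\<ge>e. coeff h i = 0"
  shows "h = 0 \<or> degree h < e"
proof (cases "e = 0")
  case True
  then have "\<forall>i. coeff h i = 0" using assms by simp
  then show ?thesis by (simp add: poly_eq_iff)
next
  case False
  then have "degree h \<le> e - 1" using assms by (intro degree_le) auto
  then show ?thesis using False by linarith
qed

lemma caseB_lemma:
  fixes Q :: "'a::comm_ring_1 poly set"
  assumes Q: "is_ideal Q"
    and allP: "\<forall>g\<in>Q. [:lead_coeff g:] \<in> Q"
  shows "h \<in> Q \<Longrightarrow> \<forall>i. [:coeff h i:] \<in> Q"
proof (induction "degree h" arbitrary: h rule: less_induct)
  case less
  define b where "b = lead_coeff h"
  define h1 where "h1 = h - monom b (degree h)"
  have bQ: "[:b:] \<in> Q" unfolding b_def using allP less.prems by (rule bspec)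
  have h1Q: "h1 \<in> Q" unfolding h1_def using ideal_diff[OF Q less.prems monom_in_Q[OF Q bQ]] .
  have "\<forall>i\<ge>degree h. coeff h1 i = 0"
  proof (intro allI impI)
    fix i assume "degree h \<le> i"
    then show "coeff h1 i = 0" unfolding h1_def b_def
      by (cases "i = degree h") (simp_all add: coeff_eq_0 coeff_monom)
  qed
  then have "h1 = 0 \<or> degree h1 < degree h" by (rule small_poly)
  then have IH: "\<forall>i. [:coeff h1 i:] \<in> Q"
  proof
    assume "h1 = 0" then show ?thesis using ideal_0[OF Q] by simp
  next
    assume "degree h1 < degree h" then show ?thesis using less.hyps[OF _ h1Q] by simp
  qed
  show ?case
  proof
    fix i
    have "coeff h i = coeff (h1 + monom b (degree h)) i" unfolding h1_def by simp
    also have "\<dots> = coeff h1 i + coeff (monom b (degree h)) i" by (rule coeff_add)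
    finally have "coeff h i = coeff h1 i + (if degree h = i then b else 0)"
      by (simp only: coeff_monom)
    then have "[:coeff h i:] = [:coeff h1 i:] + (if degree h = i then [:b:] else 0)" by simp
    moreover have "[:coeff h1 i:] + (if degree h = i then [:b:] else 0) \<in> Q"
      using IH bQ ideal_0[OF Q] by (intro ideal_add[OF Q]) auto
    ultimately show "[:coeff h i:] \<in> Q" by simp
  qed
qed


lemma caseA_lemma:
  fixes Q :: "'a::comm_ring_1 poly set"
  assumes Q: "is_ideal Q" and fQ: "f \<in> Q" and fa: "[:lead_coeff f:] \<notin> Q"
    and minf: "\<forall>g\<in>Q. [:lead_coeff g:] \<notin> Q \<longrightarrow> degree f \<le> degree g"
  shows "h \<in> Q \<Longrightarrow> \<exists>k p r. (\<forall>i. [:coeff p i:] \<in> Q) \<and> [:lead_coeff f:] ^ k * h = p + f * r"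
proof (induction "degree h" arbitrary: h rule: less_induct)
  case less
  define a where "a = lead_coeff f"
  define b where "b = lead_coeff h"
  define e where "e = degree h"
  define d where "d = degree f"
  have IHgen: "\<exists>k p r. (\<forall>i. [:coeff p i:] \<in> Q) \<and> [:a:] ^ k * h1 = p + f * r"
    if h1Q: "h1 \<in> Q" and h1c: "\<forall>i\<ge>e. coeff h1 i = 0" for h1
  proof -
    have "h1 = 0 \<or> degree h1 < e" using h1c by (rule small_poly)
    then show ?thesis
    proof
      assume "h1 = 0"
      then show ?thesis using ideal_0[OF Q] by (intro exI[of _ 0]) auto
    next
      assume "degree h1 < e" then show ?thesis using less.hyps[OF _ h1Q] unfolding e_def a_def by simp
    qed
  qed
  have cmul: "coeff ([:a:] ^ k * q) i = a ^ k * coeff q i" for k q i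
    by (simp add: poly_const_pow)
  show ?case
  proof (cases "[:b:] \<in> Q")
    case True
    define h1 where "h1 = h - monom b e"
    have h1Q: "h1 \<in> Q" unfolding h1_def using ideal_diff[OF Q less.prems monom_in_Q[OF Q True]] .
    have "\<forall>i\<ge>e. coeff h1 i = 0"
    proof (intro allI impI)
      fix i assume "e \<le> i"
      then show "coeff h1 i = 0" unfolding h1_def b_def e_def
        by (cases "i = degree h") (simp_all add: coeff_eq_0 coeff_monom)
    qed
    then obtain k p r where kpr: "\<forall>i. [:coeff p i:] \<in> Q" "[:a:] ^ k * h1 = p + f * r"
      using IHgen[OF h1Q] by blast
    define p' where "p' = p + [:a:] ^ k * monom b e"
    have "[:a:] ^ k * h = [:a:] ^ k * h1 + [:a:] ^ k * monom b e"
      unfolding h1_def by (simp add: algebra_simps)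
    then have eq: "[:a:] ^ k * h = p' + f * r" unfolding p'_def using kpr(2) by (simp add: algebra_simps)
    have "[:coeff p' i:] \<in> Q" for i
    proof -
      have "coeff p' i = coeff p i + a ^ k * (if e = i then b else 0)"
        unfolding p'_def by (simp only: coeff_add cmul coeff_monom)
      then have "[:coeff p' i:] = [:coeff p i:] + [:a ^ k:] * (if e = i then [:b:] else 0)" by simp
      moreover have "[:coeff p i:] + [:a ^ k:] * (if e = i then [:b:] else 0) \<in> Q"
        using kpr(1) True ideal_0[OF Q] by (intro ideal_add[OF Q] ideal_multL[OF Q]) auto
      ultimately show ?thesis by simp
    qed
    then show ?thesis using eq unfolding a_def by blast
  next
    case False
    then have de: "d \<le> e" using minf less.prems unfolding b_def d_def e_def by blast
    define h1 where "h1 = [:a:] * h - monom b (e - d) * f"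
    have h1Q: "h1 \<in> Q" unfolding h1_def
      by (intro ideal_diff[OF Q] ideal_multL[OF Q] less.prems fQ)
    have "\<forall>i\<ge>e. coeff h1 i = 0"
    proof (intro allI impI)
      fix i assume ie: "e \<le> i"
      have c1: "coeff ([:a:] * h) i = a * coeff h i" by simp
      have c2: "coeff (monom b (e - d) * f) i = b * coeff f (i - (e - d))"
        using ie de by (simp add: coeff_monom_mult)
      show "coeff h1 i = 0"
      proof (cases "i = e")
        case True
        then have "i - (e - d) = d" using de by simp
        then show ?thesis unfolding h1_def using True c1 c2
          by (simp add: a_def b_def d_def e_def mult.commute)
      next
        case False
        then have "i > e" "i - (e - d) > d" using ie de by auto
        then have "coeff h i = 0" "coeff f (i - (e - d)) = 0" unfolding e_def d_def
          by (simp_all add: coeff_eq_0)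
        then show ?thesis unfolding h1_def using c1 c2 by simp
      qed
    qed
    then obtain k p r where kpr: "\<forall>i. [:coeff p i:] \<in> Q" "[:a:] ^ k * h1 = p + f * r"
      using IHgen[OF h1Q] by blast
    have "[:a:] ^ Suc k * h = [:a:] ^ k * h1 + [:a:] ^ k * (monom b (e - d) * f)"
      unfolding h1_def by (simp add: algebra_simps)
    then have "[:a:] ^ Suc k * h = p + f * (r + [:a:] ^ k * monom b (e - d))"
      using kpr(2) by (simp add: algebra_simps)
    then show ?thesis using kpr(1) unfolding a_def by blast
  qed
qed


lemma const_rad:
  fixes G0 :: "'a::comm_ring_1 set"
  assumes c: "c \<in> radical (ideal_gen G0)"
  shows "[:c:] \<in> radical (ideal_gen ((\<lambda>x. [:x:]) ` G0))"
proof -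
  let ?K = "ideal_gen ((\<lambda>x. [:x:]) ` G0)"
  have "ideal_gen G0 \<subseteq> {c. [:c:] \<in> ?K}"
  proof (rule ideal_gen_least)
    show "is_ideal {c. [:c:] \<in> ?K}" by (rule P_ideal[OF ideal_gen_ideal])
    show "G0 \<subseteq> {c. [:c:] \<in> ?K}"
    proof
      fix x assume "x \<in> G0"
      then have "[:x:] \<in> (\<lambda>x. [:x:]) ` G0" by (rule imageI)
      then have "[:x:] \<in> ?K" by (rule subsetD[OF ideal_gen_sup])
      then show "x \<in> {c. [:c:] \<in> ?K}" by simp
    qed
  qed
  moreover obtain n where "c ^ n \<in> ideal_gen G0" using c unfolding radical_def by blast
  ultimately have "c ^ n \<in> {c. [:c:] \<in> ?K}" by (rule subsetD)
  then have "[:c ^ n:] \<in> ?K" by simp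
  then have "[:c:] ^ n \<in> ?K" by (simp add: poly_const_pow)
  then show ?thesis unfolding radical_def by blast
qed

lemma PX_rad:
  fixes J :: "'a::comm_ring_1 poly set"
  assumes J: "is_ideal J" and H: "\<forall>i. [:s * coeff p i:] \<in> radical J"
  shows "[:s:] * p \<in> radical J"
proof -
  have "[:s:] * p = [:s:] * (\<Sum>i\<le>degree p. monom (coeff p i) i)" by (simp only: poly_as_sum_of_monoms)
  also have "\<dots> = (\<Sum>i\<le>degree p. [:s * coeff p i:] * monom 1 i)"
    by (simp add: sum_distrib_left smult_monom)
  also have "\<dots> \<in> radical J"
    using H by (intro ideal_sum[OF radical_ideal[OF J]] ideal_multR[OF radical_ideal[OF J]]) auto
  finally show ?thesis .
qed

lemma pow_shift:
  fixes J :: "'b::comm_ring_1 set"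
  assumes J: "is_ideal J" and j: "j \<in> J"
  shows "\<exists>j'\<in>J. (j + c) ^ N = j' + c ^ N"
proof (induction N)
  case 0 then show ?case using ideal_0[OF J] by (intro bexI[of _ 0]) auto
next
  case (Suc N)
  then obtain j' where j': "j' \<in> J" "(j + c) ^ N = j' + c ^ N" by blast
  have "(j + c) ^ Suc N = (j * (j' + c ^ N) + c * j') + c ^ Suc N"
    using j'(2) by (simp add: algebra_simps)
  moreover have "j * (j' + c ^ N) + c * j' \<in> J"
    using j j'(1) by (intro ideal_add[OF J] ideal_multL[OF J] ideal_multR[OF J])
  ultimately show ?case by blast
qed

lemma combine:
  fixes J :: "'b::comm_ring_1 set"
  assumes J: "is_ideal J" and y1: "y ^ m = j + A * r" "j \<in> J" and y2: "(A ^ k * y) ^ n \<in> J"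
  shows "y \<in> radical J"
proof -
  obtain j' where j': "j' \<in> J" "(j + A * r) ^ (k * n) = j' + (A * r) ^ (k * n)"
    using pow_shift[OF J y1(2)] by blast
  have "y ^ (m * (k * n) + n) = (y ^ m) ^ (k * n) * y ^ n" by (simp add: power_add power_mult)
  also have "\<dots> = (j' + (A * r) ^ (k * n)) * y ^ n" using y1(1) j'(2) by simp
  also have "\<dots> = j' * y ^ n + r ^ (k * n) * (A ^ k * y) ^ n"
    by (simp add: algebra_simps power_mult_distrib power_mult)
  also have "\<dots> \<in> J" using j'(1) y2 by (intro ideal_add[OF J] ideal_multL[OF J] ideal_multR[OF J])
  finally show ?thesis unfolding radical_def by blast
qed


lemma ideal_plus_principal:
  fixes Q :: "'b::comm_ring_1 set"
  assumes Q: "is_ideal Q"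
  shows "is_ideal {q + A * r | q r. q \<in> Q}"
proof -
  let ?Q2 = "{q + A * r | q r. q \<in> Q}"
  have "0 + A * 0 \<in> ?Q2" using ideal_0[OF Q] by blast
  then have "0 \<in> ?Q2" by simp
  moreover have "x + y \<in> ?Q2" if xy: "x \<in> ?Q2" "y \<in> ?Q2" for x y
  proof -
    obtain q1 r1 where 1: "x = q1 + A * r1" "q1 \<in> Q" using xy(1) by blast
    obtain q2 r2 where 2: "y = q2 + A * r2" "q2 \<in> Q" using xy(2) by blast
    have "x + y = (q1 + q2) + A * (r1 + r2)" using 1 2 by (simp add: algebra_simps)
    moreover have "q1 + q2 \<in> Q" using 1 2 by (intro ideal_add[OF Q])
    ultimately show ?thesis by blast
  qed
  moreover have "z * x \<in> ?Q2" if xx: "x \<in> ?Q2" for z x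
  proof -
    obtain q1 r1 where 1: "x = q1 + A * r1" "q1 \<in> Q" using xx by blast
    have "z * x = z * q1 + A * (z * r1)" using 1 by (simp add: algebra_simps)
    moreover have "z * q1 \<in> Q" using 1 by (intro ideal_multL[OF Q])
    ultimately show ?thesis by blast
  qed
  ultimately show ?thesis unfolding is_ideal_def by blast
qed

lemma fwd_max:
  fixes Q :: "'a::comm_ring_1 poly set" and s :: 'a
  assumes Hs: "\<And>I. is_ideal I \<Longrightarrow> \<exists>J. fin_gen_ideal J \<and> J \<subseteq> I \<and> (\<lambda>x. s * x) ` I \<subseteq> radical J"
    and Q: "is_ideal Q"
    and maxQ: "\<And>Q'. is_ideal Q' \<Longrightarrow> Q \<subseteq> Q' \<Longrightarrow> Q' \<noteq> Q \<Longrightarrow>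
         \<exists>J. fin_gen_ideal J \<and> J \<subseteq> Q' \<and> (\<lambda>x. [:s:] * x) ` Q' \<subseteq> radical J"
  shows "\<exists>J. fin_gen_ideal J \<and> J \<subseteq> Q \<and> (\<lambda>x. [:s:] * x) ` Q \<subseteq> radical J"
proof -
  define P where "P = {c. [:c:] \<in> Q}"
  have Pi: "is_ideal P" using P_ideal[OF Q] unfolding P_def .
  obtain J0 where J0: "fin_gen_ideal J0" "J0 \<subseteq> P" "(\<lambda>x. s * x) ` P \<subseteq> radical J0"
    using Hs[OF Pi] by blast
  obtain G0 where G0: "finite G0" "J0 = ideal_gen G0" using J0(1) unfolding fin_gen_ideal_def by blast
  define C where "C = (\<lambda>x. [:x:]) ` G0"
  have Cfin: "finite C" unfolding C_def using G0(1) by simp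
  have CQ: "C \<subseteq> Q"
  proof
    fix z assume "z \<in> C"
    then obtain x where x: "x \<in> G0" "z = [:x:]" unfolding C_def by blast
    have "x \<in> J0" unfolding G0(2) using x(1) by (rule subsetD[OF ideal_gen_sup])
    then have "x \<in> P" using J0(2) by (rule subsetD[rotated])
    then show "z \<in> Q" using x(2) unfolding P_def by simp
  qed
  have Crad: "[:s * c:] \<in> radical (ideal_gen C)" if cP: "c \<in> P" for c
  proof -
    have "s * c \<in> (\<lambda>x. s * x) ` P" using cP by (rule imageI)
    then have "s * c \<in> radical (ideal_gen G0)" using J0(3) G0(2) by auto
    then show ?thesis unfolding C_def by (rule const_rad)
  qed
  show ?thesis
  proof (cases "\<forall>g\<in>Q. [:lead_coeff g:] \<in> Q")
    case True
    define J where "J = ideal_gen C"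
    have "fin_gen_ideal J" unfolding J_def fin_gen_ideal_def using Cfin by (intro exI[of _ C]) simp
    moreover have "J \<subseteq> Q" unfolding J_def by (rule ideal_gen_least[OF Q CQ])
    moreover have "(\<lambda>x. [:s:] * x) ` Q \<subseteq> radical J"
    proof
      fix y assume "y \<in> (\<lambda>x. [:s:] * x) ` Q"
      then obtain h where h: "h \<in> Q" "y = [:s:] * h" by blast
      have "\<forall>i. [:coeff h i:] \<in> Q" using caseB_lemma[OF Q True h(1)] .
      then have "\<forall>i. [:s * coeff h i:] \<in> radical J" unfolding J_def using Crad unfolding P_def by simp
      then have "[:s:] * h \<in> radical J" by (rule PX_rad[OF ideal_gen_ideal[of C, folded J_def]])
      then show "y \<in> radical J" using h(2) by simp
    qed
    ultimately show ?thesis by blast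
  next
    case False
    then have "\<exists>g. g \<in> Q \<and> [:lead_coeff g:] \<notin> Q" by blast
    then obtain g where "g \<in> Q \<and> [:lead_coeff g:] \<notin> Q" by blast
    from ex_has_least_nat[of "\<lambda>g. g \<in> Q \<and> [:lead_coeff g:] \<notin> Q", OF this, of degree]
    obtain f where f: "f \<in> Q" "[:lead_coeff f:] \<notin> Q"
      and fmin: "\<forall>g. g \<in> Q \<and> [:lead_coeff g:] \<notin> Q \<longrightarrow> degree f \<le> degree g" by blast
    have minf: "\<forall>g\<in>Q. [:lead_coeff g:] \<notin> Q \<longrightarrow> degree f \<le> degree g" using fmin by blast
    define A where "A = [:lead_coeff f:]"
    define Q2 where "Q2 = {q + A * r | q r. q \<in> Q}"
    have Q2i: "is_ideal Q2" unfolding Q2_def by (rule ideal_plus_principal[OF Q])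
    have QQ2: "Q \<subseteq> Q2"
    proof
      fix q assume "q \<in> Q"
      then have "q + A * 0 \<in> Q2" unfolding Q2_def by blast
      then show "q \<in> Q2" by simp
    qed
    have "0 + A * 1 \<in> Q2" unfolding Q2_def using ideal_0[OF Q] by blast
    then have "A \<in> Q2" by simp
    then have "Q2 \<noteq> Q" using f(2) unfolding A_def by blast
    then obtain J2 where J2: "fin_gen_ideal J2" "J2 \<subseteq> Q2" "(\<lambda>x. [:s:] * x) ` Q2 \<subseteq> radical J2"
      using maxQ[OF Q2i QQ2] by blast
    obtain G where G: "finite G" "J2 = ideal_gen G" using J2(1) unfolding fin_gen_ideal_def by blast
    have "\<forall>g\<in>G. \<exists>q. q \<in> Q \<and> (\<exists>r. g = q + A * r)"
    proof
      fix g assume "g \<in> G"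
      then have "g \<in> J2" unfolding G(2) by (rule subsetD[OF ideal_gen_sup])
      then have "g \<in> Q2" using J2(2) by (rule subsetD[rotated])
      then show "\<exists>q. q \<in> Q \<and> (\<exists>r. g = q + A * r)" unfolding Q2_def by blast
    qed
    then obtain qf where qf: "\<forall>g\<in>G. qf g \<in> Q \<and> (\<exists>r. g = qf g + A * r)" by metis
    define Gens where "Gens = C \<union> {f} \<union> qf ` G"
    define J where "J = ideal_gen Gens"
    have Ji: "is_ideal J" unfolding J_def by (rule ideal_gen_ideal)
    have GensJ: "Gens \<subseteq> J" unfolding J_def by (rule ideal_gen_sup)
    have "finite Gens" unfolding Gens_def using Cfin G(1) by simp
    then have fg: "fin_gen_ideal J" unfolding J_def fin_gen_ideal_def by (intro exI[of _ Gens]) simp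
    have GensQ: "Gens \<subseteq> Q" unfolding Gens_def using CQ f(1) qf by blast
    have JQ: "J \<subseteq> Q" unfolding J_def by (rule ideal_gen_least[OF Q GensQ])
    define L where "L = {j + A * r | j r. j \<in> J}"
    have Li: "is_ideal L" unfolding L_def by (rule ideal_plus_principal[OF Ji])
    have GL: "G \<subseteq> L"
    proof
      fix g assume gG: "g \<in> G"
      then obtain r where r: "g = qf g + A * r" using qf by blast
      have "qf g \<in> Gens" unfolding Gens_def using gG by blast
      then have "qf g \<in> J" using GensJ by blast
      then show "g \<in> L" unfolding L_def using r by blast
    qed
    have J2L: "J2 \<subseteq> L" unfolding G(2) by (rule ideal_gen_least[OF Li GL])
    have CJ: "ideal_gen C \<subseteq> J"
      by (rule ideal_gen_least[OF Ji]) (use GensJ in \<open>auto simp: Gens_def\<close>)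
    have fJ: "f \<in> J" using GensJ unfolding Gens_def by blast
    have "(\<lambda>x. [:s:] * x) ` Q \<subseteq> radical J"
    proof
      fix y assume "y \<in> (\<lambda>x. [:s:] * x) ` Q"
      then obtain h where h: "h \<in> Q" "y = [:s:] * h" by blast
      have "h \<in> Q2" using h(1) QQ2 by blast
      then have "[:s:] * h \<in> (\<lambda>x. [:s:] * x) ` Q2" by (rule imageI)
      then have "y \<in> radical J2" using J2(3) h(2) by auto
      then obtain m where "y ^ m \<in> J2" unfolding radical_def by blast
      then have "y ^ m \<in> L" using J2L by blast
      then obtain j r where jr: "y ^ m = j + A * r" "j \<in> J" unfolding L_def by blast
      obtain k p r' where kpr: "\<forall>i. [:coeff p i:] \<in> Q" "A ^ k * h = p + f * r'"
        using caseA_lemma[OF Q f(1) f(2) minf h(1)] unfolding A_def by blast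
      have "\<forall>i. [:s * coeff p i:] \<in> radical (ideal_gen C)" using kpr(1) Crad unfolding P_def by simp
      then have "[:s:] * p \<in> radical (ideal_gen C)" by (rule PX_rad[OF ideal_gen_ideal])
      then have sp: "[:s:] * p \<in> radical J" using radical_mono[OF CJ] by blast
      have "[:s:] * (f * r') \<in> J" using fJ by (intro ideal_multL[OF Ji] ideal_multR[OF Ji])
      then have sf: "[:s:] * (f * r') \<in> radical J" using radical_sup by blast
      have "A ^ k * y = [:s:] * p + [:s:] * (f * r')" using kpr(2) h(2)
        by (metis distrib_left mult.left_commute)
      also have "\<dots> \<in> radical J" using sp sf by (rule ideal_add[OF radical_ideal[OF Ji]])
      finally obtain n where "(A ^ k * y) ^ n \<in> J" unfolding radical_def by blast
      then show "y \<in> radical J" using combine[OF Ji jr] by blast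
    qed
    then show ?thesis using fg JQ by blast
  qed
qed


lemma fwd_dir:
  fixes S :: "'a::comm_ring_1 set"
  assumes H: "u_S_noetherian_spectrum S"
  shows "u_S_noetherian_spectrum ((\<lambda>s. [:s:]) ` S)"
proof -
  obtain s where sS: "s \<in> S" and Hs: "\<And>I. is_ideal I \<Longrightarrow>
        (\<exists>J. fin_gen_ideal J \<and> J \<subseteq> I \<and> (\<lambda>x. s * x) ` I \<subseteq> radical J)"
    using H unfolding u_S_noetherian_spectrum_def by blast
  define good where "good Q \<longleftrightarrow> (\<exists>J. fin_gen_ideal J \<and> J \<subseteq> Q \<and> (\<lambda>x. [:s:] * x) ` Q \<subseteq> radical J)"
    for Q :: "'a poly set"
  have allgood: "good Q" if Q: "is_ideal Q" for Q
  proof (rule ccontr)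
    assume nQ: "\<not> good Q"
    define AA where "AA = {Q. is_ideal Q \<and> \<not> good Q}"
    have ne: "AA \<noteq> {}" using Q nQ unfolding AA_def by blast
    have ch: "\<Union>CC \<in> AA" if CCne: "CC \<noteq> {}" and CCch: "subset.chain AA CC" for CC
    proof -
      have CA: "CC \<subseteq> AA" and chn: "\<forall>X\<in>CC. \<forall>Y\<in>CC. X \<subseteq> Y \<or> Y \<subseteq> X"
        using CCch unfolding subset_chain_def by auto
      have Ii: "is_ideal X" if "X \<in> CC" for X using that CA unfolding AA_def by blast
      have Ui: "is_ideal (\<Union>CC)"
      proof -
        obtain X where X: "X \<in> CC" using CCne by blast
        then have "0 \<in> \<Union>CC" using ideal_0[OF Ii[OF X]] by blast
        moreover have "x + y \<in> \<Union>CC" if xy: "x \<in> \<Union>CC" "y \<in> \<Union>CC" for x y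
        proof -
          obtain X Y where XY: "X \<in> CC" "Y \<in> CC" "x \<in> X" "y \<in> Y" using xy by blast
          show ?thesis
          proof (cases "X \<subseteq> Y")
            case True
            then have "x + y \<in> Y" using XY ideal_add[OF Ii[OF XY(2)]] by blast
            then show ?thesis using XY(2) by blast
          next
            case False
            then have "Y \<subseteq> X" using chn XY by blast
            then have "x + y \<in> X" using XY ideal_add[OF Ii[OF XY(1)]] by blast
            then show ?thesis using XY(1) by blast
          qed
        qed
        moreover have "r * x \<in> \<Union>CC" if xx: "x \<in> \<Union>CC" for r x
        proof -
          obtain X where XX: "X \<in> CC" "x \<in> X" using xx by blast
          then have "r * x \<in> X" using ideal_multL[OF Ii[OF XX(1)]] by blast
          then show ?thesis using XX(1) by blast
        qed
        ultimately show ?thesis unfolding is_ideal_def by blast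
      qed
      have "\<not> good (\<Union>CC)"
      proof
        assume "good (\<Union>CC)"
        then obtain J where J: "fin_gen_ideal J" "J \<subseteq> \<Union>CC" "(\<lambda>x. [:s:] * x) ` \<Union>CC \<subseteq> radical J"
          unfolding good_def by blast
        obtain F where F: "finite F" "J = ideal_gen F" using J(1) unfolding fin_gen_ideal_def by blast
        have "F \<subseteq> \<Union>CC" using ideal_gen_sup[of F] F(2) J(2) by simp
        then obtain B where B: "B \<in> CC" "F \<subseteq> B"
          using finite_subset_Union_chain[OF F(1) _ CCne CCch] by blast
        have "J \<subseteq> B" unfolding F(2) by (rule ideal_gen_least[OF Ii[OF B(1)] B(2)])
        moreover have "(\<lambda>x. [:s:] * x) ` B \<subseteq> radical J" using J(3) B(1) by blast
        ultimately have "good B" unfolding good_def using J(1) by blast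
        then show False using B(1) CA unfolding AA_def by blast
      qed
      then show ?thesis unfolding AA_def using Ui by blast
    qed
    obtain M where M: "M \<in> AA" and Mmax: "\<forall>X\<in>AA. M \<subseteq> X \<longrightarrow> X = M"
      using subset_Zorn_nonempty[OF ne ch] by blast
    have Mi: "is_ideal M" and nM: "\<not> good M" using M unfolding AA_def by auto
    have "good M" unfolding good_def
    proof (rule fwd_max[OF Hs Mi])
      fix Q' assume Q': "is_ideal Q'" "M \<subseteq> Q'" "Q' \<noteq> M"
      have "good Q'"
      proof (rule ccontr)
        assume "\<not> good Q'"
        then have "Q' \<in> AA" unfolding AA_def using Q'(1) by blast
        then show False using Mmax Q' by blast
      qed
      then show "\<exists>J. fin_gen_ideal J \<and> J \<subseteq> Q' \<and> (\<lambda>x. [:s:] * x) ` Q' \<subseteq> radical J"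
        unfolding good_def .
    qed
    then show False using nM by blast
  qed
  have "[:s:] \<in> (\<lambda>s. [:s:]) ` S" using sS by (rule imageI)
  moreover have "\<forall>I. is_ideal I \<longrightarrow>
        (\<exists>J. fin_gen_ideal J \<and> J \<subseteq> I \<and> (\<lambda>x. [:s:] * x) ` I \<subseteq> radical J)"
    using allgood unfolding good_def by blast
  ultimately show ?thesis unfolding u_S_noetherian_spectrum_def by blast
qed

theorem theorem4p3:
  fixes S :: "'a::comm_ring_1 set"
  assumes "mult_subset S"
  shows "u_S_noetherian_spectrum S \<longleftrightarrow> u_S_noetherian_spectrum ((\<lambda>s. [:s:]) ` S)"
  using fwd_dir back_dir by blast

end
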